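(* Let $n\ge 3$ and $m\ge 1$ be integers, and let $Q_{n,1},\dots,Q_{n,m}$ be the partition of $\{0,1,\dots,m+1\}^n$ defined below. Then each $Q_{n,i}$ is a connected $n$-dimensional tile.
   Context: Define $f:\{0,\dots,m+1\}^3\to\{1,\dots,m\}$ by: $f(x,y,z)=y$ if $0\le x\le m$, $1\le y\le m$, $z=0$; $f=x$ if $1\le x\le m$, $0\le y\le m$, $z=m+1$; $f=y$ if $x=0$, $1\le y\le m$, $1\le z\le m$; $f=x$ if $1\le x\le m$, $y=0$, $1\le z\le m$; $f=z$ if $1\le x\le m+1$, $1\le y\le m+1$, $1\le z\le m$; and $f=1$ at all remaining points. Let $f_3=f$ and for $n\ge4$: $f_n(x_1,\dots,x_n)=f_{n-1}(x_1,x_2,x_3,\dots,x_{n-1})$ if $0\le x_n\le m$, and $f_n(x_1,\dots,x_n)=f_{n-1}(m+1-x_2,x_1,x_3,\dots,x_{n-1})$ if $x_n=m+1$. Let $Q_{n,i}=\{x\in\{0,\dots,m+1\}^n: f_n(x)=i\}$. An $n$-dimensional tile is a non-empty finite subset of $\mathbb{Z}^n$; two disjoint sets are adjacent if some $p$ in the first and $q$ in the second satisfy $p+v=q$ for a unit vector $v$ parallel to an axis; a tile is connected if it cannot be partitioned into two non-adjacent sets. *)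

theory Defs
  imports Main
begin

text \<open>Points of Z^n are represented as int lists of length n; coordinate x_k is xs ! (k-1).\<close>

definition f3 :: "int \<Rightarrow> int \<Rightarrow> int \<Rightarrow> int \<Rightarrow> int" where
  "f3 m x y z =
    (if 0 \<le> x \<and> x \<le> m \<and> 1 \<le> y \<and> y \<le> m \<and> z = 0 then y
     else if 1 \<le> x \<and> x \<le> m \<and> 0 \<le> y \<and> y \<le> m \<and> z = m + 1 then x
     else if x = 0 \<and> 1 \<le> y \<and> y \<le> m \<and> 1 \<le> z \<and> z \<le> m then y
     else if 1 \<le> x \<and> x \<le> m \<and> y = 0 \<and> 1 \<le> z \<and> z \<le> m then x
     else if 1 \<le> x \<and> x \<le> m + 1 \<and> 1 \<le> y \<and> y \<le> m + 1 \<and> 1 \<le> z \<and> z \<le> m then z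
     else 1)"

text \<open>fF m k is f_{k+3}, applied to a list of length k+3.\<close>
primrec fF :: "int \<Rightarrow> nat \<Rightarrow> int list \<Rightarrow> int" where
  "fF m 0 xs = f3 m (xs ! 0) (xs ! 1) (xs ! 2)"
| "fF m (Suc k) xs =
     (let ys = butlast xs in
      if last xs \<le> m then fF m k ys
      else fF m k ((m + 1 - ys ! 1) # (ys ! 0) # drop 2 ys))"

definition fn :: "nat \<Rightarrow> nat \<Rightarrow> int list \<Rightarrow> int" where
  "fn m n xs = fF (int m) (n - 3) xs"

definition Q :: "nat \<Rightarrow> nat \<Rightarrow> int \<Rightarrow> int list set" where
  "Q m n i = {xs. length xs = n \<and> set xs \<subseteq> {0 .. int m + 1} \<and> fn m n xs = i}"

definition tile :: "nat \<Rightarrow> int list set \<Rightarrow> bool" where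
  "tile n T \<longleftrightarrow> T \<noteq> {} \<and> finite T \<and> (\<forall>p\<in>T. length p = n)"

definition unit_step :: "int list \<Rightarrow> int list \<Rightarrow> bool" where
  "unit_step p q \<longleftrightarrow> length q = length p \<and>
     (\<exists>k < length p. (q ! k = p ! k + 1 \<or> q ! k = p ! k - 1) \<and>
        (\<forall>j < length p. j \<noteq> k \<longrightarrow> q ! j = p ! j))"

definition adjacent :: "int list set \<Rightarrow> int list set \<Rightarrow> bool" where
  "adjacent A B \<longleftrightarrow> (\<exists>p\<in>A. \<exists>q\<in>B. unit_step p q)"

definition tile_connected :: "int list set \<Rightarrow> bool" where
  "tile_connected T \<longleftrightarrow>
     (\<forall>A B. A \<noteq> {} \<and> B \<noteq> {} \<and> A \<inter> B = {} \<and> A \<union> B = T \<longrightarrow> adjacent A B)"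

end

theory Submission
  imports Defs
begin

fun ustep :: "int list \<Rightarrow> int list \<Rightarrow> bool" where
  "ustep (a#p) (b#q) = (((b = a + 1 \<or> b = a - 1) \<and> p = q) \<or> (a = b \<and> ustep p q))"
| "ustep _ _ = False"

lemma ustep_sym: "ustep p q \<Longrightarrow> ustep q p"
  by (induction p q rule: ustep.induct) auto

lemma ustep_unit_step: "ustep p q \<Longrightarrow> unit_step p q"
proof (induction p q rule: ustep.induct)
  case (1 a p b q)
  show ?case
  proof (cases "(b = a + 1 \<or> b = a - 1) \<and> p = q")
    case True
    then show ?thesis unfolding unit_step_def
      by (intro conjI exI[of _ 0]) (auto simp: nth_Cons split: nat.splits)
  next
    case False
    with 1 have ab: "a = b" and u: "unit_step p q" by auto
    from u obtain k where k: "k < length p" "q ! k = p ! k + 1 \<or> q ! k = p ! k - 1"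
      "\<forall>j<length p. j \<noteq> k \<longrightarrow> q ! j = p ! j" and l: "length q = length p"
      unfolding unit_step_def by blast
    show ?thesis unfolding unit_step_def
      using k l ab by (intro conjI exI[of _ "Suc k"]) (auto simp: nth_Cons split: nat.splits)
  qed
qed auto

definition RS :: "int list set \<Rightarrow> (int list \<times> int list) set" where
  "RS S = {(p,q). p \<in> S \<and> q \<in> S \<and> ustep p q}"

definition conn :: "int list set \<Rightarrow> bool" where
  "conn S \<longleftrightarrow> (\<forall>p\<in>S. \<forall>q\<in>S. (p,q) \<in> (RS S)\<^sup>*)"

lemma RS_mono: "S \<subseteq> T \<Longrightarrow> (RS S)\<^sup>* \<subseteq> (RS T)\<^sup>*"
  by (rule rtrancl_mono) (auto simp: RS_def)

lemma RS_sym: "(p,q) \<in> (RS S)\<^sup>* \<Longrightarrow> (q,p) \<in> (RS S)\<^sup>*"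
proof (induction rule: rtrancl_induct)
  case base then show ?case by simp
next
  case (step y z)
  then have "(z,y) \<in> RS S" by (auto simp: RS_def ustep_sym)
  then show ?case using step.IH by (meson converse_rtrancl_into_rtrancl)
qed

lemma conn_tile_connected:
  assumes "conn S" shows "tile_connected S"
  unfolding tile_connected_def
proof (intro allI impI)
  fix A B assume h: "A \<noteq> {} \<and> B \<noteq> {} \<and> A \<inter> B = {} \<and> A \<union> B = S"
  then obtain a b where ab: "a \<in> A" "b \<in> B" by blast
  then have "(a,b) \<in> (RS S)\<^sup>*" using assms h unfolding conn_def by blast
  then have "b \<in> A \<or> adjacent A B"
  proof (induction rule: rtrancl_induct)
    case base then show ?case using ab by simp
  next
    case (step y z)
    from step(2) have yz: "y \<in> S" "z \<in> S" "unit_step y z"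
      unfolding RS_def by (auto intro: ustep_unit_step)
    show ?case
    proof (cases "z \<in> A")
      case True then show ?thesis by simp
    next
      case False
      then have zB: "z \<in> B" using yz(2) h by blast
      show ?thesis
      proof (cases "y \<in> A")
        case True
        then have "adjacent A B" unfolding adjacent_def using zB yz(3) by blast
        then show ?thesis by simp
      next
        case False
        then show ?thesis using step(3) by simp
      qed
    qed
  qed
  then show "adjacent A B" using ab h by blast
qed

lemma conn_union:
  assumes "conn S" "conn T" "p \<in> S" "q \<in> T" "p = q \<or> ustep p q"
  shows "conn (S \<union> T)"
proof -
  have S: "(x,y) \<in> (RS (S \<union> T))\<^sup>*" if "x \<in> S" "y \<in> S" for x y
    using assms(1) that RS_mono[of S "S \<union> T"] unfolding conn_def by blast
  have T: "(x,y) \<in> (RS (S \<union> T))\<^sup>*" if "x \<in> T" "y \<in> T" for x y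
    using assms(2) that RS_mono[of T "S \<union> T"] unfolding conn_def by blast
  have pq: "(p,q) \<in> (RS (S \<union> T))\<^sup>*"
    using assms(3-5) by (auto simp: RS_def)
  have qp: "(q,p) \<in> (RS (S \<union> T))\<^sup>*" using RS_sym[OF pq] .
  show ?thesis unfolding conn_def
  proof (intro ballI)
    fix x y assume "x \<in> S \<union> T" "y \<in> S \<union> T"
    then show "(x,y) \<in> (RS (S \<union> T))\<^sup>*"
    proof -
      have "x \<in> S \<or> x \<in> T" "y \<in> S \<or> y \<in> T" using \<open>x \<in> S \<union> T\<close> \<open>y \<in> S \<union> T\<close> by auto
      moreover have "(x,y) \<in> (RS (S \<union> T))\<^sup>*" if "x \<in> S" "y \<in> T"
        using rtrancl_trans[OF S[OF that(1) assms(3)] rtrancl_trans[OF pq T[OF assms(4) that(2)]]] .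
      moreover have "(x,y) \<in> (RS (S \<union> T))\<^sup>*" if "x \<in> T" "y \<in> S"
        using rtrancl_trans[OF T[OF that(1) assms(4)] rtrancl_trans[OF qp S[OF assms(3) that(2)]]] .
      ultimately show ?thesis using S T by blast
    qed
  qed
qed

lemma conn_image:
  assumes "conn S" "\<And>p q. p \<in> S \<Longrightarrow> q \<in> S \<Longrightarrow> ustep p q \<Longrightarrow> ustep (g p) (g q)"
  shows "conn (g ` S)"
proof -
  have "(g p, g q) \<in> (RS (g ` S))\<^sup>*" if "(p,q) \<in> (RS S)\<^sup>*" for p q
    using that
  proof (induction rule: rtrancl_induct)
    case base then show ?case by simp
  next
    case (step y z)
    then have "(g y, g z) \<in> RS (g ` S)" using assms(2) by (auto simp: RS_def)
    then show ?case using step.IH by (meson rtrancl_into_rtrancl)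
  qed
  then show ?thesis using assms(1) unfolding conn_def by blast
qed

lemma conn_chain:
  fixes F :: "nat \<Rightarrow> int list set"
  assumes "\<And>j. j \<le> k \<Longrightarrow> conn (F j)"
    and "\<And>j. j < k \<Longrightarrow> \<exists>p\<in>F j. \<exists>q\<in>F (Suc j). ustep p q"
  shows "conn (\<Union>j\<le>k. F j)"
  using assms
proof (induction k)
  case 0 then show ?case by simp
next
  case (Suc k)
  have c: "conn (\<Union>j\<le>k. F j)" using Suc by simp
  obtain p q where "p \<in> F k" "q \<in> F (Suc k)" "ustep p q" using Suc.prems(2)[of k] by auto
  then have "conn ((\<Union>j\<le>k. F j) \<union> F (Suc k))"
    using conn_union[OF c Suc.prems(1)[of "Suc k"], of p q] by auto
  moreover have "(\<Union>j\<le>Suc k. F j) = (\<Union>j\<le>k. F j) \<union> F (Suc k)"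
    by (auto simp: atMost_Suc)
  ultimately show ?case by simp
qed

lemma seg:
  fixes g :: "int \<Rightarrow> int list"
  assumes "\<And>t. ustep (g t) (g (t+1))" "g ` {a..b} \<subseteq> S" "a \<le> t" "t \<le> b"
  shows "(g a, g t) \<in> (RS S)\<^sup>*"
  using assms(3,4)
proof (induction t rule: int_ge_induct)
  case base then show ?case by simp
next
  case (step t)
  then have "(g t, g (t+1)) \<in> RS S" using assms(1,2) by (auto simp: RS_def)
  moreover have "(g a, g t) \<in> (RS S)\<^sup>*" using step by auto
  ultimately show ?case by (meson rtrancl_into_rtrancl)
qed

definition box3 :: "int \<Rightarrow> int \<Rightarrow> int \<Rightarrow> int \<Rightarrow> int \<Rightarrow> int \<Rightarrow> int list set" where
  "box3 a1 b1 a2 b2 a3 b3 = {[x,y,z] |x y z. a1 \<le> x \<and> x \<le> b1 \<and> a2 \<le> y \<and> y \<le> b2 \<and> a3 \<le> z \<and> z \<le> b3}"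

lemma conn_box3: "conn (box3 a1 b1 a2 b2 a3 b3)"
proof -
  let ?B = "box3 a1 b1 a2 b2 a3 b3"
  have P: "([a1,a2,a3], [x,y,z]) \<in> (RS ?B)\<^sup>*" if "[x,y,z] \<in> ?B" for x y z
  proof -
    from that have h: "a1 \<le> x" "x \<le> b1" "a2 \<le> y" "y \<le> b2" "a3 \<le> z" "z \<le> b3"
      by (auto simp: box3_def)
    have 1: "([a1,a2,a3], [x,a2,a3]) \<in> (RS ?B)\<^sup>*"
      proof -
      have "(\<lambda>t. [t,a2,a3]) ` {a1..b1} \<subseteq> ?B" using h unfolding box3_def by (intro image_subsetI) auto
      then show ?thesis using seg[of "\<lambda>t. [t,a2,a3]" a1 b1 ?B x] h by simp
    qed
    have 2: "([x,a2,a3], [x,y,a3]) \<in> (RS ?B)\<^sup>*"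
      proof -
      have "(\<lambda>t. [x,t,a3]) ` {a2..b2} \<subseteq> ?B" using h unfolding box3_def by (intro image_subsetI) auto
      then show ?thesis using seg[of "\<lambda>t. [x,t,a3]" a2 b2 ?B y] h by simp
    qed
    have 3: "([x,y,a3], [x,y,z]) \<in> (RS ?B)\<^sup>*"
      proof -
      have "(\<lambda>t. [x,y,t]) ` {a3..b3} \<subseteq> ?B" using h unfolding box3_def by (intro image_subsetI) auto
      then show ?thesis using seg[of "\<lambda>t. [x,y,t]" a3 b3 ?B z] h by simp
    qed
    show ?thesis using 1 2 3 by (meson rtrancl_trans)
  qed
  show ?thesis unfolding conn_def
  proof (intro ballI)
    fix p q assume "p \<in> ?B" "q \<in> ?B"
    then obtain x y z x' y' z' where "p = [x,y,z]" "q = [x',y',z']" "p \<in> ?B" "q \<in> ?B"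
      by (auto simp: box3_def)
    then have "([a1,a2,a3],p) \<in> (RS ?B)\<^sup>*" "([a1,a2,a3],q) \<in> (RS ?B)\<^sup>*" using P by auto
    then show "(p,q) \<in> (RS ?B)\<^sup>*" using RS_sym rtrancl_trans by fast
  qed
qed


lemma len3: "length xs = 3 \<Longrightarrow> \<exists>x y z. xs = [x,y,z]"
  by (cases xs; cases "tl xs"; cases "tl (tl xs)") auto

lemma in_box3[simp]: "[x,y,z] \<in> box3 a1 b1 a2 b2 a3 b3 \<longleftrightarrow>
   a1 \<le> x \<and> x \<le> b1 \<and> a2 \<le> y \<and> y \<le> b2 \<and> a3 \<le> z \<and> z \<le> b3"
  by (auto simp: box3_def)

lemma Q3_mem: "[x,y,z] \<in> Q m 3 i \<longleftrightarrow>
   (0 \<le> x \<and> x \<le> int m + 1 \<and> 0 \<le> y \<and> y \<le> int m + 1 \<and> 0 \<le> z \<and> z \<le> int m + 1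
    \<and> f3 (int m) x y z = i)"
  by (auto simp: Q_def fn_def)

lemma box3_E:
  assumes "xs \<in> box3 a1 b1 a2 b2 a3 b3"
  obtains x y z where "xs = [x,y,z]" "a1 \<le> x" "x \<le> b1" "a2 \<le> y" "y \<le> b2" "a3 \<le> z" "z \<le> b3"
  using assms by (auto simp: box3_def)

lemma three_cases: "0 \<le> (x::int) \<Longrightarrow> x \<le> M + 1 \<Longrightarrow> x = 0 \<or> x = M + 1 \<or> (1 \<le> x \<and> x \<le> M)"
  by auto

lemma Q3_eq:
  fixes M :: int
  assumes "M = int m" "1 \<le> M" "1 \<le> i" "i \<le> M"
  shows "Q m 3 i = ((((box3 0 M i i 0 0 \<union> box3 0 0 i i 1 M) \<union> box3 1 (M+1) 1 (M+1) i i)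
     \<union> box3 i i 0 0 1 M) \<union> box3 i i 0 M (M+1) (M+1)) \<union>
     (if i = 1 then ((((((((box3 0 (M+1) 0 0 0 0 \<union> box3 (M+1) (M+1) 0 (M+1) 0 0)
        \<union> box3 0 (M+1) (M+1) (M+1) 0 0) \<union> box3 0 0 0 0 1 M) \<union> box3 0 0 (M+1) (M+1) 1 M)
        \<union> box3 (M+1) (M+1) 0 0 1 M) \<union> box3 0 0 0 (M+1) (M+1) (M+1))
        \<union> box3 (M+1) (M+1) 0 (M+1) (M+1) (M+1)) \<union> box3 0 (M+1) (M+1) (M+1) (M+1) (M+1))
      else {})" (is "_ = ?R")
proof (intro set_eqI iffI)
  fix xs assume "xs \<in> Q m 3 i"
  moreover then obtain x y z where xs: "xs = [x,y,z]" using len3[of xs] by (auto simp: Q_def)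
  ultimately have h: "0 \<le> x" "x \<le> M + 1" "0 \<le> y" "y \<le> M + 1" "0 \<le> z" "z \<le> M + 1"
    "f3 M x y z = i" using assms(1) by (simp_all add: Q3_mem)
  have cx: "x = 0 \<or> x = M + 1 \<or> (1 \<le> x \<and> x \<le> M)" using h by auto
  have cy: "y = 0 \<or> y = M + 1 \<or> (1 \<le> y \<and> y \<le> M)" using h by auto
  have cz: "z = 0 \<or> z = M + 1 \<or> (1 \<le> z \<and> z \<le> M)" using h by auto
  show "xs \<in> ?R" unfolding xs using cx cy cz h(7) assms(2-4)
    by (elim disjE conjE; simp add: f3_def)
next
  fix xs assume a: "xs \<in> ?R"
  show "xs \<in> Q m 3 i"
  proof (cases "i = 1")
    case False
    have "xs \<in> ((((box3 0 M i i 0 0 \<union> box3 0 0 i i 1 M) \<union> box3 1 (M+1) 1 (M+1) i i)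
     \<union> box3 i i 0 0 1 M) \<union> box3 i i 0 M (M+1) (M+1))" using a False by simp
    then show ?thesis using assms
      by (elim UnE box3_E; simp add: Q3_mem f3_def)
  next
    case True
    have "xs \<in> ((((box3 0 M i i 0 0 \<union> box3 0 0 i i 1 M) \<union> box3 1 (M+1) 1 (M+1) i i)
     \<union> box3 i i 0 0 1 M) \<union> box3 i i 0 M (M+1) (M+1)) \<union>
     ((((((((box3 0 (M+1) 0 0 0 0 \<union> box3 (M+1) (M+1) 0 (M+1) 0 0)
        \<union> box3 0 (M+1) (M+1) (M+1) 0 0) \<union> box3 0 0 0 0 1 M) \<union> box3 0 0 (M+1) (M+1) 1 M)
        \<union> box3 (M+1) (M+1) 0 0 1 M) \<union> box3 0 0 0 (M+1) (M+1) (M+1))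
        \<union> box3 (M+1) (M+1) 0 (M+1) (M+1) (M+1)) \<union> box3 0 (M+1) (M+1) (M+1) (M+1) (M+1))"
      using a True by simp
    then show ?thesis using assms True
      by (elim UnE box3_E; simp add: Q3_mem f3_def)
  qed
qed

lemma conn_Q3:
  assumes "1 \<le> m" "1 \<le> i" "i \<le> int m"
  shows "conn (Q m 3 i)"
proof -
  define M where "M = int m"
  have M: "1 \<le> M" "1 \<le> i" "i \<le> M" using assms by (auto simp: M_def)
  have c1: "conn (box3 0 M i i 0 0 \<union> box3 0 0 i i 1 M)"
    by (rule conn_union[OF conn_box3 conn_box3, where p="[0,i,0]" and q="[0,i,1]"]) (use M in auto)
  have c2: "conn ((box3 0 M i i 0 0 \<union> box3 0 0 i i 1 M) \<union> box3 1 (M+1) 1 (M+1) i i)"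
    by (rule conn_union[OF c1 conn_box3, where p="[0,i,i]" and q="[1,i,i]"]) (use M in auto)
  have c3: "conn (((box3 0 M i i 0 0 \<union> box3 0 0 i i 1 M) \<union> box3 1 (M+1) 1 (M+1) i i)
     \<union> box3 i i 0 0 1 M)"
    by (rule conn_union[OF c2 conn_box3, where p="[i,1,i]" and q="[i,0,i]"]) (use M in auto)
  have c4: "conn ((((box3 0 M i i 0 0 \<union> box3 0 0 i i 1 M) \<union> box3 1 (M+1) 1 (M+1) i i)
     \<union> box3 i i 0 0 1 M) \<union> box3 i i 0 M (M+1) (M+1))"
    by (rule conn_union[OF c3 conn_box3, where p="[i,0,M]" and q="[i,0,M+1]"]) (use M in auto)
  show ?thesis
  proof (cases "i = 1")
    case False
    then show ?thesis using Q3_eq[OF M_def M] c4 by simp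
  next
    case True
    have d1: "conn (box3 0 (M+1) 0 0 0 0 \<union> box3 (M+1) (M+1) 0 (M+1) 0 0)"
      by (rule conn_union[OF conn_box3 conn_box3, where p="[M+1,0,0]" and q="[M+1,0,0]"]) (use M in auto)
    have d2: "conn ((box3 0 (M+1) 0 0 0 0 \<union> box3 (M+1) (M+1) 0 (M+1) 0 0)
        \<union> box3 0 (M+1) (M+1) (M+1) 0 0)"
      by (rule conn_union[OF d1 conn_box3, where p="[M+1,M+1,0]" and q="[M+1,M+1,0]"]) (use M in auto)
    have d3: "conn (((box3 0 (M+1) 0 0 0 0 \<union> box3 (M+1) (M+1) 0 (M+1) 0 0)
        \<union> box3 0 (M+1) (M+1) (M+1) 0 0) \<union> box3 0 0 0 0 1 M)"
      by (rule conn_union[OF d2 conn_box3, where p="[0,0,0]" and q="[0,0,1]"]) (use M in auto)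
    have d4: "conn ((((box3 0 (M+1) 0 0 0 0 \<union> box3 (M+1) (M+1) 0 (M+1) 0 0)
        \<union> box3 0 (M+1) (M+1) (M+1) 0 0) \<union> box3 0 0 0 0 1 M) \<union> box3 0 0 (M+1) (M+1) 1 M)"
      by (rule conn_union[OF d3 conn_box3, where p="[0,M+1,0]" and q="[0,M+1,1]"]) (use M in auto)
    have d5: "conn (((((box3 0 (M+1) 0 0 0 0 \<union> box3 (M+1) (M+1) 0 (M+1) 0 0)
        \<union> box3 0 (M+1) (M+1) (M+1) 0 0) \<union> box3 0 0 0 0 1 M) \<union> box3 0 0 (M+1) (M+1) 1 M)
        \<union> box3 (M+1) (M+1) 0 0 1 M)"
      by (rule conn_union[OF d4 conn_box3, where p="[M+1,0,0]" and q="[M+1,0,1]"]) (use M in auto)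
    have d6: "conn ((((((box3 0 (M+1) 0 0 0 0 \<union> box3 (M+1) (M+1) 0 (M+1) 0 0)
        \<union> box3 0 (M+1) (M+1) (M+1) 0 0) \<union> box3 0 0 0 0 1 M) \<union> box3 0 0 (M+1) (M+1) 1 M)
        \<union> box3 (M+1) (M+1) 0 0 1 M) \<union> box3 0 0 0 (M+1) (M+1) (M+1))"
      by (rule conn_union[OF d5 conn_box3, where p="[0,0,M]" and q="[0,0,M+1]"]) (use M in auto)
    have d7: "conn (((((((box3 0 (M+1) 0 0 0 0 \<union> box3 (M+1) (M+1) 0 (M+1) 0 0)
        \<union> box3 0 (M+1) (M+1) (M+1) 0 0) \<union> box3 0 0 0 0 1 M) \<union> box3 0 0 (M+1) (M+1) 1 M)
        \<union> box3 (M+1) (M+1) 0 0 1 M) \<union> box3 0 0 0 (M+1) (M+1) (M+1))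
        \<union> box3 (M+1) (M+1) 0 (M+1) (M+1) (M+1))"
      by (rule conn_union[OF d6 conn_box3, where p="[M+1,0,M]" and q="[M+1,0,M+1]"]) (use M in auto)
    have d8: "conn ((((((((box3 0 (M+1) 0 0 0 0 \<union> box3 (M+1) (M+1) 0 (M+1) 0 0)
        \<union> box3 0 (M+1) (M+1) (M+1) 0 0) \<union> box3 0 0 0 0 1 M) \<union> box3 0 0 (M+1) (M+1) 1 M)
        \<union> box3 (M+1) (M+1) 0 0 1 M) \<union> box3 0 0 0 (M+1) (M+1) (M+1))
        \<union> box3 (M+1) (M+1) 0 (M+1) (M+1) (M+1)) \<union> box3 0 (M+1) (M+1) (M+1) (M+1) (M+1))"
      by (rule conn_union[OF d7 conn_box3, where p="[0,M+1,M+1]" and q="[0,M+1,M+1]"]) (use M in auto)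
    have "conn (((((box3 0 M i i 0 0 \<union> box3 0 0 i i 1 M) \<union> box3 1 (M+1) 1 (M+1) i i)
     \<union> box3 i i 0 0 1 M) \<union> box3 i i 0 M (M+1) (M+1)) \<union>
     ((((((((box3 0 (M+1) 0 0 0 0 \<union> box3 (M+1) (M+1) 0 (M+1) 0 0)
        \<union> box3 0 (M+1) (M+1) (M+1) 0 0) \<union> box3 0 0 0 0 1 M) \<union> box3 0 0 (M+1) (M+1) 1 M)
        \<union> box3 (M+1) (M+1) 0 0 1 M) \<union> box3 0 0 0 (M+1) (M+1) (M+1))
        \<union> box3 (M+1) (M+1) 0 (M+1) (M+1) (M+1)) \<union> box3 0 (M+1) (M+1) (M+1) (M+1) (M+1)))"
      by (rule conn_union[OF c4 d8, of "[0,i,0]" "[0,0,0]"]) (use M True in auto)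
    then show ?thesis using Q3_eq[OF M_def M] True by simp
  qed
qed

definition sg' :: "int \<Rightarrow> int list \<Rightarrow> int list" where
  "sg' M ys = ys ! 1 # (M + 1 - ys ! 0) # drop 2 ys"

lemma fn_step:
  assumes "n \<ge> 4" "length ys = n - 1"
  shows "fn m n (ys @ [t]) = (if t \<le> int m then fn m (n-1) ys
          else fn m (n-1) ((int m + 1 - ys ! 1) # ys ! 0 # drop 2 ys))"
proof -
  have e: "n - 3 = Suc (n - 1 - 3)" using assms by simp
  show ?thesis unfolding fn_def e by (simp add: Let_def)
qed

lemma Q_step:
  assumes "n \<ge> 4"
  shows "Q m n i = (\<Union>j\<le>m. (\<lambda>ys. ys @ [int j]) ` Q m (n-1) i)
     \<union> (\<lambda>ys. sg' (int m) ys @ [int m + 1]) ` Q m (n-1) i"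
proof (intro set_eqI iffI)
  fix xs assume xs: "xs \<in> Q m n i"
  then have "xs \<noteq> []" using assms by (auto simp: Q_def)
  then obtain ys t where yt: "xs = ys @ [t]" by (metis rev_exhaust)
  have ly: "length ys = n - 1" using xs yt by (auto simp: Q_def)
  then obtain a b r where ys: "ys = a # b # r" using assms
    by (cases ys; cases "tl ys") auto
  have st: "set ys \<subseteq> {0..int m+1}" "0 \<le> t" "t \<le> int m + 1" using xs yt by (auto simp: Q_def)
  have fv: "fn m n xs = i" using xs by (simp add: Q_def)
  show "xs \<in> (\<Union>j\<le>m. (\<lambda>ys. ys @ [int j]) ` Q m (n-1) i)
     \<union> (\<lambda>ys. sg' (int m) ys @ [int m + 1]) ` Q m (n-1) i"
  proof (cases "t \<le> int m")
    case True
    then have "ys \<in> Q m (n-1) i" using fv fn_step[OF assms ly, of m t] yt ly st by (simp add: Q_def)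
    moreover have "t = int (nat t)" "nat t \<le> m" using True st by auto
    ultimately show ?thesis unfolding yt by blast
  next
    case False
    then have t: "t = int m + 1" using st by simp
    let ?v = "(int m + 1 - b) # a # r"
    have "?v \<in> Q m (n-1) i" using fv fn_step[OF assms ly, of m t] yt ly st False
      by (auto simp: Q_def ys)
    moreover have "xs = sg' (int m) ?v @ [int m + 1]" unfolding yt t ys sg'_def by simp
    ultimately show ?thesis by blast
  qed
next
  fix xs assume "xs \<in> (\<Union>j\<le>m. (\<lambda>ys. ys @ [int j]) ` Q m (n-1) i)
     \<union> (\<lambda>ys. sg' (int m) ys @ [int m + 1]) ` Q m (n-1) i"
  then show "xs \<in> Q m n i"
  proof (elim UnE)
    assume "xs \<in> (\<Union>j\<le>m. (\<lambda>ys. ys @ [int j]) ` Q m (n-1) i)"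
    then obtain j ys where j: "j \<le> m" "ys \<in> Q m (n-1) i" "xs = ys @ [int j]" by blast
    then have ly: "length ys = n - 1" by (simp add: Q_def)
    show ?thesis using j fn_step[OF assms ly, of m "int j"] assms by (auto simp: Q_def)
  next
    assume "xs \<in> (\<lambda>ys. sg' (int m) ys @ [int m + 1]) ` Q m (n-1) i"
    then obtain v where v: "v \<in> Q m (n-1) i" "xs = sg' (int m) v @ [int m + 1]" by blast
    then have lv: "length v = n - 1" by (simp add: Q_def)
    then obtain a b r where vv: "v = a # b # r" using assms
      by (cases v; cases "tl v") auto
    have ly: "length (b # (int m + 1 - a) # r) = n - 1" using lv vv by simp
    show ?thesis using v fn_step[OF assms ly, of m "int m + 1"] assms vv
      by (auto simp: Q_def sg'_def)
  qed
qed

lemma fF_rep: "fF M k (a # b # c # replicate k 0) = f3 M a b c" if "0 \<le> M"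
proof (induction k)
  case 0 then show ?case by simp
next
  case (Suc k)
  have e: "a # b # c # replicate (Suc k) 0 = (a # b # c # replicate k 0) @ [0]"
    by (simp add: replicate_append_same)
  show ?case unfolding e using Suc that by (simp add: Let_def)
qed

lemma ustep_snoc: "ustep p q \<Longrightarrow> ustep (p @ [t]) (q @ [t])"
  by (induction p q rule: ustep.induct) auto

lemma ustep_last: "ustep (p @ [t]) (p @ [t + 1])"
  by (induction p) auto

lemma wit:
  assumes "1 \<le> m" "1 \<le> i" "i \<le> int m" "n \<ge> 3" "c \<in> {1, int m}"
  shows "c # 1 # i # replicate (n - 3) 0 \<in> Q m n i"
proof -
  have "fn m n (c # 1 # i # replicate (n - 3) 0) = f3 (int m) c 1 i"
    unfolding fn_def by (rule fF_rep) simp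
  also have "\<dots> = i" using assms by (auto simp: f3_def)
  finally show ?thesis using assms by (auto simp: Q_def)
qed

lemma conn_Q:
  assumes "1 \<le> m" "1 \<le> i" "i \<le> int m" "n \<ge> 3"
  shows "conn (Q m n i)"
  using assms(4)
proof (induction n rule: nat_induct_at_least)
  case base then show ?case using conn_Q3 assms by simp
next
  case (Suc n)
  have n4: "Suc n \<ge> 4" using Suc by simp
  have L: "\<And>p. p \<in> Q m n i \<Longrightarrow> length p = n" by (simp add: Q_def)
  define w where "w = 1 # 1 # i # replicate (n - 3) (0::int)"
  have w: "w \<in> Q m n i" unfolding w_def using wit assms Suc by simp
  have v: "int m # 1 # i # replicate (n - 3) 0 \<in> Q m n i" using wit assms Suc by simp
  have lo: "conn (\<Union>j\<le>m. (\<lambda>ys. ys @ [int j]) ` Q m n i)"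
  proof (rule conn_chain)
    fix j show "conn ((\<lambda>ys. ys @ [int j]) ` Q m n i)"
      by (rule conn_image[OF Suc.IH]) (simp add: ustep_snoc)
  next
    fix j assume "j < m"
    have "ustep (w @ [int j]) (w @ [int (Suc j)])" using ustep_last[of w "int j"] by (simp add: add.commute)
    then show "\<exists>p\<in>(\<lambda>ys. ys @ [int j]) ` Q m n i. \<exists>q\<in>(\<lambda>ys. ys @ [int (Suc j)]) ` Q m n i. ustep p q"
      using w by blast
  qed
  have up: "conn ((\<lambda>ys. sg' (int m) ys @ [int m + 1]) ` Q m n i)"
  proof (rule conn_image[OF Suc.IH])
    fix p q assume pq: "p \<in> Q m n i" "q \<in> Q m n i" "ustep p q"
    obtain a b r where p: "p = a # b # r" using L[OF pq(1)] Suc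
      by (cases p; cases "tl p") auto
    obtain a' b' r' where q: "q = a' # b' # r'" using L[OF pq(2)] Suc
      by (cases q; cases "tl q") auto
    show "ustep (sg' (int m) p @ [int m + 1]) (sg' (int m) q @ [int m + 1])"
      using pq(3) unfolding p q sg'_def by (intro ustep_snoc) auto
  qed
  have sw: "sg' (int m) (int m # 1 # i # replicate (n - 3) 0) = w" by (simp add: sg'_def w_def)
  have "conn ((\<Union>j\<le>m. (\<lambda>ys. ys @ [int j]) ` Q m n i)
     \<union> (\<lambda>ys. sg' (int m) ys @ [int m + 1]) ` Q m n i)"
  proof (rule conn_union[OF lo up, of "w @ [int m]" "w @ [int m + 1]"])
    show "w @ [int m] \<in> (\<Union>j\<le>m. (\<lambda>ys. ys @ [int j]) ` Q m n i)" using w by blast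
    show "w @ [int m + 1] \<in> (\<lambda>ys. sg' (int m) ys @ [int m + 1]) ` Q m n i"
      using v sw by (metis image_eqI)
    show "w @ [int m] = w @ [int m + 1] \<or> ustep (w @ [int m]) (w @ [int m + 1])"
      using ustep_last by blast
  qed
  then show ?case using Q_step[OF n4] by simp
qed

theorem lemma5p2:
  fixes m n :: nat and i :: int
  assumes "n \<ge> 3" and "m \<ge> 1" and "1 \<le> i" and "i \<le> int m"
  shows "tile n (Q m n i) \<and> tile_connected (Q m n i)"
proof
  have "1 # 1 # i # replicate (n - 3) 0 \<in> Q m n i" using wit assms by simp
  moreover have "finite (Q m n i)"
    by (rule finite_subset[OF _ finite_lists_length_eq[of "{0..int m + 1}" n]]) (auto simp: Q_def)
  ultimately show "tile n (Q m n i)" unfolding tile_def Q_def by blast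
  show "tile_connected (Q m n i)" using conn_tile_connected conn_Q assms by simp
qed

end
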